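(* Let $(A_*,\partial,\ell)$ be an ascending chain complex over a field $\kappa$ with $H_k(A_* )=0$ for all $k$, and suppose each $(A_k,\ell|_{A_k})$ satisfies the best approximation property. Then there are index sets $\mathcal{I}_k$ and, for each $k$, an $\ell$-orthogonal basis $\{x^k_i: i\in\mathcal{I}_{k+1}\}\cup\{y^k_j:j\in\mathcal{I}_k\}$ of $A_k$ such that $\partial y^{k+1}_i=x^k_i$ for every $i\in\mathcal{I}_{k+1}$.
   Context: An ascending chain complex over $\kappa$ is a triple $(C_*,\partial,\ell)$ where $(C_*=\bigoplus_{k\in\mathbb{Z}}C_k,\partial)$ is a chain complex of $\kappa$-vector spaces and $\ell\colon C_*\to\mathbb{R}\cup\{-\infty\}$ satisfies: $\ell(x)=-\infty$ iff $x=0$; $\ell(\sum_i c_ix_i)\le\max\{\ell(x_i): c_i\neq 0\}$, with equality if the $x_i$ lie in pairwise distinct degrees; and $\ell(\partial x)\le\ell(x)$. A subset $S\subset V\setminus\{0\}$ is $\ell$-orthogonal if $\ell(\sum c_iv_i)=\max\{\ell(v_i):c_i\neq0\}$ for all finitely many distinct $v_i\in S$, $c_i\in\kappa$. A filtered vector space $(V,\ell)$ satisfies the best approximation property if for every proper subspace $W\subsetneq V$ and every $v\in V\setminus W$ there is $w_0\in W$ with $\ell(v-w_0)\le\ell(v-w)$ for all $w\in W$. *)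

theory Defs
  imports Main "HOL-Library.Extended_Real"
begin

text \<open>
  The total space C_* of a Z-graded chain complex of vector spaces over a field 'k
  is modelled as an ambient vector space 'v (scalar multiplication scale) together
  with a family of subspaces C k (k :: int) such that C_* is their internal direct sum.
  Filtration values lie in ereal; R union {-infinity} is encoded by requiring l x < infinity.
\<close>

definition internal_direct_sum ::
  "('k::field \<Rightarrow> 'v::ab_group_add \<Rightarrow> 'v) \<Rightarrow> (int \<Rightarrow> 'v set) \<Rightarrow> bool" where
  "internal_direct_sum scale C \<longleftrightarrow>
     (\<forall>v. \<exists>!f :: int \<Rightarrow> 'v. finite {k. f k \<noteq> 0} \<and> (\<forall>k. f k \<in> C k) \<and>
            v = (\<Sum>k\<in>{k. f k \<noteq> 0}. f k))"

definition chain_complex ::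
  "('k::field \<Rightarrow> 'v::ab_group_add \<Rightarrow> 'v) \<Rightarrow> (int \<Rightarrow> 'v set) \<Rightarrow> ('v \<Rightarrow> 'v) \<Rightarrow> bool" where
  "chain_complex scale C d \<longleftrightarrow>
     vector_space scale \<and>
     (\<forall>k. module.subspace scale (C k)) \<and>
     internal_direct_sum scale C \<and>
     Vector_Spaces.linear scale scale d \<and>
     (\<forall>k. d ` C k \<subseteq> C (k - 1)) \<and>
     (\<forall>x. d (d x) = 0)"

definition ascending_chain_complex ::
  "('k::field \<Rightarrow> 'v::ab_group_add \<Rightarrow> 'v) \<Rightarrow> (int \<Rightarrow> 'v set) \<Rightarrow> ('v \<Rightarrow> 'v) \<Rightarrow> ('v \<Rightarrow> ereal) \<Rightarrow> bool" where
  "ascending_chain_complex scale C d l \<longleftrightarrow>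
     chain_complex scale C d \<and>
     (\<forall>x. l x \<noteq> \<infinity>) \<and>
     (\<forall>x. l x = -\<infinity> \<longleftrightarrow> x = 0) \<and>
     (\<forall>(S :: 'v set) (c :: 'v \<Rightarrow> 'k). finite S \<longrightarrow>
        l (\<Sum>x\<in>S. scale (c x) x) \<le> Sup {l x | x. x \<in> S \<and> c x \<noteq> 0}) \<and>
     (\<forall>(S :: 'v set) (c :: 'v \<Rightarrow> 'k) (deg :: 'v \<Rightarrow> int).
        finite S \<longrightarrow> inj_on deg S \<longrightarrow> (\<forall>x\<in>S. x \<in> C (deg x)) \<longrightarrow>
        l (\<Sum>x\<in>S. scale (c x) x) = Sup {l x | x. x \<in> S \<and> c x \<noteq> 0}) \<and>
     (\<forall>x. l (d x) \<le> l x)"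

definition acyclic_complex :: "(int \<Rightarrow> 'v::ab_group_add set) \<Rightarrow> ('v \<Rightarrow> 'v) \<Rightarrow> bool" where
  "acyclic_complex C d \<longleftrightarrow> (\<forall>k. {x \<in> C k. d x = 0} \<subseteq> d ` C (k + 1))"

text \<open>l-orthogonal subsets of V (Sup of the empty set is -infinity = max of the empty set).\<close>
definition l_orthogonal ::
  "('k::field \<Rightarrow> 'v::ab_group_add \<Rightarrow> 'v) \<Rightarrow> ('v \<Rightarrow> ereal) \<Rightarrow> 'v set \<Rightarrow> 'v set \<Rightarrow> bool" where
  "l_orthogonal scale l V S \<longleftrightarrow> S \<subseteq> V - {0} \<and>
     (\<forall>T (c :: 'v \<Rightarrow> 'k). finite T \<longrightarrow> T \<subseteq> S \<longrightarrow>
        l (\<Sum>v\<in>T. scale (c v) v) = Sup {l v | v. v \<in> T \<and> c v \<noteq> 0})"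

definition best_approximation_property ::
  "('k::field \<Rightarrow> 'v::ab_group_add \<Rightarrow> 'v) \<Rightarrow> ('v \<Rightarrow> ereal) \<Rightarrow> 'v set \<Rightarrow> bool" where
  "best_approximation_property scale l V \<longleftrightarrow>
     (\<forall>W. module.subspace scale W \<longrightarrow> W \<subset> V \<longrightarrow>
        (\<forall>v \<in> V - W. \<exists>w0 \<in> W. \<forall>w \<in> W. l (v - w0) \<le> l (v - w)))"

end

theory Submission
  imports Defs
begin

locale filt = vector_space scale for scale :: "'k::field \<Rightarrow> 'v::ab_group_add \<Rightarrow> 'v" +
  fixes l :: "'v \<Rightarrow> ereal"
  assumes l_bot: "l x = -\<infinity> \<longleftrightarrow> x = 0"
  and l_sum: "finite S \<Longrightarrow> l (\<Sum>x\<in>S. scale (c x) x) \<le> Sup {l x | x. x \<in> S \<and> c x \<noteq> 0}"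
begin

definition perp :: "'v \<Rightarrow> 'v set \<Rightarrow> bool" where
  "perp p M \<longleftrightarrow> (\<forall>w\<in>M. l p \<le> l (p + w))"

lemma l_zero[simp]: "l 0 = -\<infinity>" using l_bot by simp

lemma l_scale_le: "l (scale c x) \<le> l x"
proof -
  have "l (\<Sum>y\<in>{x}. scale ((\<lambda>_. c) y) y) \<le> Sup {l y | y. y \<in> {x} \<and> c \<noteq> 0}"
    by (rule l_sum) simp
  also have "\<dots> \<le> l x" by (auto intro!: Sup_least)
  finally show ?thesis by simp
qed

lemma l_scale: "c \<noteq> 0 \<Longrightarrow> l (scale c x) = l x"
proof (rule antisym[OF l_scale_le])
  assume "c \<noteq> 0"
  have "l x = l (scale (inverse c) (scale c x))" using \<open>c \<noteq> 0\<close> by simp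
  also have "\<dots> \<le> l (scale c x)" by (rule l_scale_le)
  finally show "l x \<le> l (scale c x)" .
qed

lemma l_neg[simp]: "l (- x) = l x"
  using l_scale[of "-1" x] by simp

lemma l_add: "l (x + y) \<le> max (l x) (l y)"
proof (cases "x = y")
  case True
  have "scale (1 + 1) x = x + x" by (simp only: scale_left_distrib scale_one)
  then show ?thesis using True l_scale_le[of "1+1" x] by simp
next
  case False
  have "l (\<Sum>z\<in>{x,y}. scale ((\<lambda>_. 1) z) z) \<le> Sup {l z | z. z \<in> {x,y} \<and> (1::'k) \<noteq> 0}"
    by (rule l_sum) simp
  also have "\<dots> \<le> max (l x) (l y)" by (auto intro!: Sup_least)
  finally show ?thesis using False by simp
qed

lemma l_diff: "l (x - y) \<le> max (l x) (l y)"
  using l_add[of x "-y"] by simp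

lemma l_add_less: assumes "l x < l y" shows "l (x + y) = l y"
proof (rule antisym)
  show "l (x + y) \<le> l y" using l_add[of x y] assms by simp
  have "l y = l ((x + y) - x)" by simp
  also have "\<dots> \<le> max (l (x+y)) (l x)" by (rule l_diff)
  finally show "l y \<le> l (x + y)" using assms by (auto simp: max_def split: if_splits)
qed

lemma perp_max:
  assumes "subspace M" "a \<in> M" "perp p M"
  shows "l (p + a) = max (l p) (l a)"
proof (cases "l p < l a")
  case True
  have "l (a + p) = l a" using l_add_less[of p a] True by (simp add: add.commute)
  then show ?thesis using True by (simp add: add.commute)
next
  case False
  have "l (p + a) \<le> l p" using l_add[of p a] False by simp
  moreover have "l p \<le> l (p + a)" using assms unfolding perp_def by auto
  ultimately show ?thesis using False by simp
qed

lemma perp_scale: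
  assumes "subspace M" "perp p M" shows "perp (scale c p) M"
  unfolding perp_def
proof
  fix w assume w: "w \<in> M"
  show "l (scale c p) \<le> l (scale c p + w)"
  proof (cases "c = 0")
    case True then show ?thesis by simp
  next
    case False
    have "scale c p + w = scale c (p + scale (inverse c) w)"
      using False by (simp add: scale_right_distrib)
    then have "l (scale c p + w) = l (p + scale (inverse c) w)" using False l_scale by simp
    moreover have "l p \<le> l (p + scale (inverse c) w)"
      using assms w subspace_scale unfolding perp_def by blast
    ultimately show ?thesis using False l_scale by simp
  qed
qed

lemma perp_mono: "perp p M \<Longrightarrow> M' \<subseteq> M \<Longrightarrow> perp p M'"
  unfolding perp_def by auto

lemma l_span_le:
  assumes "a \<in> span S" "\<forall>s\<in>S. l s \<le> t" shows "l a \<le> t"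
proof -
  have "subspace {a. l a \<le> t}"
  proof (rule subspaceI)
    show "0 \<in> {a. l a \<le> t}" by simp
    show "x + y \<in> {a. l a \<le> t}" if "x \<in> {a. l a \<le> t}" "y \<in> {a. l a \<le> t}" for x y
      using that l_add[of x y] by (auto simp: max_def split: if_splits)
    show "scale c x \<in> {a. l a \<le> t}" if "x \<in> {a. l a \<le> t}" for c x
      using that l_scale_le[of c x] by auto
  qed
  then show ?thesis using assms span_induct[of a S "\<lambda>a. l a \<le> t"] by auto
qed

lemma l_gt_bot: "x \<noteq> 0 \<Longrightarrow> -\<infinity> < l x"
  using l_bot[of x] by auto

lemma loc_orth:
  assumes loc: "\<forall>s\<in>S. s \<noteq> 0 \<and> perp s (span (S - {s}))" and T: "finite T" "T \<subseteq> S"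
  shows "l (\<Sum>v\<in>T. scale (c v) v) = Sup {l v | v. v \<in> T \<and> c v \<noteq> 0}"
proof (cases "{v\<in>T. c v \<noteq> 0} = {}")
  case True
  then have A: "(\<Sum>v\<in>T. scale (c v) v) = 0" by (intro sum.neutral) auto
  have B: "{l v | v. v \<in> T \<and> c v \<noteq> 0} = {}" using True by auto
  show ?thesis unfolding A B by (simp add: bot_ereal_def)
next
  case False
  define F where "F = {v\<in>T. c v \<noteq> 0}"
  have fin: "finite F" using T unfolding F_def by simp
  have Fne: "F \<noteq> {}" using False F_def by simp
  have "Max (l ` F) \<in> l ` F" using fin Fne by (intro Max_in) auto
  then obtain m where m: "m \<in> F" "l m = Max (l ` F)" by auto
  have mx: "\<forall>v\<in>F. l v \<le> l m" using fin m by simp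
  have FS: "F \<subseteq> S" using T F_def by auto
  have "(\<Sum>v\<in>T. scale (c v) v) = (\<Sum>v\<in>F. scale (c v) v)"
    unfolding F_def by (rule sum.mono_neutral_right) (use T in auto)
  also have "\<dots> = scale (c m) m + (\<Sum>v\<in>F-{m}. scale (c v) v)"
    using fin m by (simp add: sum.remove)
  finally have eq: "(\<Sum>v\<in>T. scale (c v) v) = scale (c m) m + (\<Sum>v\<in>F-{m}. scale (c v) v)" .
  define R where "R = (\<Sum>v\<in>F-{m}. scale (c v) v)"
  have R1: "R \<in> span (S - {m})" unfolding R_def
    by (intro span_sum span_scale span_base) (use FS in auto)
  have R2: "R \<in> span (F - {m})" unfolding R_def
    by (intro span_sum span_scale span_base) auto
  have lR: "l R \<le> l m" by (rule l_span_le[OF R2]) (use mx in auto)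
  have "perp (scale (c m) m) (span (S - {m}))"
    using loc m FS by (intro perp_scale) auto
  then have "l (scale (c m) m + R) = max (l (scale (c m) m)) (l R)"
    using R1 perp_max by blast
  also have "\<dots> = l m" using lR m(1) l_scale[of "c m" m] F_def by (simp add: max_def)
  finally have lhs: "l (\<Sum>v\<in>T. scale (c v) v) = l m" using eq R_def by simp
  have "Sup {l v | v. v \<in> T \<and> c v \<noteq> 0} = l m"
  proof (rule antisym)
    show "Sup {l v | v. v \<in> T \<and> c v \<noteq> 0} \<le> l m" using mx F_def by (auto intro!: Sup_least)
    show "l m \<le> Sup {l v | v. v \<in> T \<and> c v \<noteq> 0}" by (rule Sup_upper) (use m(1) F_def in blast)
  qed
  then show ?thesis using lhs by simp
qed

lemma perp_residual:
  assumes bap: "\<forall>W. subspace W \<longrightarrow> W \<subset> V \<longrightarrow> (\<forall>v \<in> V - W. \<exists>w0 \<in> W. \<forall>w \<in> W. l (v - w0) \<le> l (v - w))"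
    and V: "subspace V" and W: "subspace W" "W \<subseteq> V" and x: "x \<in> V - W"
  shows "\<exists>r. r \<in> V - W \<and> r - x \<in> W \<and> perp r W"
proof -
  have "W \<subset> V" using W x by auto
  then obtain w0 where w0: "w0 \<in> W" "\<forall>w\<in>W. l (x - w0) \<le> l (x - w)" using bap W x by blast
  have "x - w0 \<in> V" using V W w0 x subspace_diff by blast
  moreover have "x - w0 \<notin> W"
  proof
    assume "x - w0 \<in> W"
    then have "(x - w0) + w0 \<in> W" using W w0 subspace_add by blast
    then show False using x by simp
  qed
  moreover have "(x - w0) - x \<in> W" using w0 W subspace_neg by fastforce
  moreover have "perp (x - w0) W" unfolding perp_def
  proof
    fix w assume "w \<in> W"
    then have "w0 - w \<in> W" using W w0 subspace_diff by blast
    then have "l (x - w0) \<le> l (x - (w0 - w))" using w0 by blast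
    then show "l (x - w0) \<le> l (x - w0 + w)" by (simp add: algebra_simps)
  qed
  ultimately show ?thesis by blast
qed

lemma indep_mod:
  assumes W: "subspace W" and U: "\<forall>u\<in>U. u \<notin> W \<and> perp u W" and inj: "inj_on l U"
    and F: "finite F" "F \<subseteq> U" and s: "(\<Sum>u\<in>F. scale (c u) u) \<in> W"
  shows "\<forall>u\<in>F. c u = 0"
proof (rule ccontr)
  assume "\<not> (\<forall>u\<in>F. c u = 0)"
  define G where "G = {u\<in>F. c u \<noteq> 0}"
  have fin: "finite G" using F G_def by simp
  have Gne: "G \<noteq> {}" using \<open>\<not> (\<forall>u\<in>F. c u = 0)\<close> G_def by auto
  have "Max (l ` G) \<in> l ` G" using fin Gne by (intro Max_in) auto
  then obtain m where m: "m \<in> G" "l m = Max (l ` G)" by auto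
  have mx: "\<forall>v\<in>G. l v \<le> l m" using fin m by simp
  have GU: "G \<subseteq> U" using F G_def by auto
  have mW: "m \<notin> W" "perp m W" using U GU m by auto
  have cm: "c m \<noteq> 0" using m G_def by simp
  have "(\<Sum>u\<in>F. scale (c u) u) = (\<Sum>u\<in>G. scale (c u) u)"
    unfolding G_def by (rule sum.mono_neutral_right) (use F in auto)
  also have "\<dots> = scale (c m) m + (\<Sum>v\<in>G-{m}. scale (c v) v)"
    using fin m by (simp add: sum.remove)
  finally have eq: "(\<Sum>u\<in>F. scale (c u) u) = scale (c m) m + (\<Sum>v\<in>G-{m}. scale (c v) v)" .
  define R where "R = (\<Sum>v\<in>G-{m}. scale (c v) v)"
  have R2: "R \<in> span (G - {m})" unfolding R_def
    by (intro span_sum span_scale span_base) auto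
  have lR: "l R < l m"
  proof (cases "G - {m} = {}")
    case True
    then have "R = 0" unfolding R_def by (simp only: sum.empty)
    moreover have "m \<noteq> 0" using mW W subspace_0 by auto
    ultimately show ?thesis using l_bot[of m] by auto
  next
    case False
    have "Max (l ` (G-{m})) \<in> l ` (G-{m})" using fin False by (intro Max_in) auto
    then obtain v where v: "v \<in> G - {m}" "l v = Max (l ` (G-{m}))" by (metis (no_types, lifting) imageE)
    have "l v \<noteq> l m" using inj v m GU unfolding inj_on_def by blast
    then have lvm: "l v < l m" using mx v by force
    have "l R \<le> l v"
      by (rule l_span_le[OF R2]) (use fin v in auto)
    then show ?thesis using lvm by simp
  qed
  define w where "w = (\<Sum>u\<in>F. scale (c u) u)"
  have wW: "w \<in> W" using s w_def by simp
  have "scale (inverse (c m)) w = m + scale (inverse (c m)) R"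
    using eq cm unfolding w_def R_def by (simp add: scale_right_distrib)
  then have "m + (- scale (inverse (c m)) w) = - scale (inverse (c m)) R" by (simp add: algebra_simps)
  moreover have "- scale (inverse (c m)) w \<in> W" using wW W subspace_neg subspace_scale by blast
  ultimately have "l m \<le> l (- scale (inverse (c m)) R)" using mW unfolding perp_def by metis
  also have "\<dots> = l R" using cm l_scale by simp
  finally show False using lR by simp
qed

lemma vs_field: "vector_space ((*) :: 'k \<Rightarrow> 'k \<Rightarrow> 'k)"
  by unfold_locales (simp_all add: algebra_simps)

lemma min_exists:
  assumes bap: "\<forall>W. subspace W \<longrightarrow> W \<subset> V \<longrightarrow> (\<forall>v \<in> V - W. \<exists>w0 \<in> W. \<forall>w \<in> W. l (v - w0) \<le> l (v - w))"
    and V: "subspace V" and W: "subspace W" "W \<subseteq> V" "W \<noteq> V"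
  shows "\<exists>u0\<in>V-W. \<forall>u\<in>V-W. l u0 \<le> l u"
proof (rule ccontr)
  assume "\<not> ?thesis"
  then have nm: "\<forall>x\<in>V-W. \<exists>u\<in>V-W. l u < l x" by (auto simp: not_le)
  define T where "T = {l r | r. r \<in> V - W \<and> perp r W}"
  define rep where "rep t = (SOME r. r \<in> V - W \<and> perp r W \<and> l r = t)" for t
  have rep: "rep t \<in> V - W \<and> perp (rep t) W \<and> l (rep t) = t" if "t \<in> T" for t
  proof -
    have "\<exists>r. r \<in> V - W \<and> perp r W \<and> l r = t" using that T_def by auto
    then show ?thesis unfolding rep_def by (rule someI_ex)
  qed
  define U where "U = rep ` T"
  have Uprop: "\<forall>u\<in>U. u \<notin> W \<and> perp u W" "U \<subseteq> V" using rep U_def by auto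
  have inj: "inj_on l U" unfolding inj_on_def U_def using rep by force
  obtain x0 where x0: "x0 \<in> V - W" using W by auto
  obtain r0 where r0: "r0 \<in> V - W" "perp r0 W" using perp_residual[OF bap V W(1,2) x0] by auto
  define v where "v = rep (l r0)"
  have vT: "l r0 \<in> T" using r0 T_def by auto
  have vU: "v \<in> U" using vT v_def U_def by auto
  obtain B where B: "B \<subseteq> W" "independent B" "W \<subseteq> span B"
    using maximal_independent_subset[of W] by blast
  have spanB: "span B \<subseteq> W" using B W span_minimal by blast
  have indep: "independent (B \<union> U)"
    unfolding independent_explicit_module
  proof (intro allI impI)
    fix t u x assume t: "finite t" "t \<subseteq> B \<union> U" "(\<Sum>v\<in>t. scale (u v) v) = 0" "x \<in> t"
    have split: "(\<Sum>v\<in>t. scale (u v) v) = (\<Sum>v\<in>t \<inter> U. scale (u v) v) + (\<Sum>v\<in>t - U. scale (u v) v)"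
      using t(1) by (rule sum.Int_Diff)
    have "(\<Sum>v\<in>t - U. scale (u v) v) \<in> span B"
      using t(2) by (intro span_sum span_scale span_base) auto
    then have inW: "(\<Sum>v\<in>t - U. scale (u v) v) \<in> W" using spanB by auto
    have "(\<Sum>v\<in>t \<inter> U. scale (u v) v) = - (\<Sum>v\<in>t - U. scale (u v) v)"
      using split t(3) by (simp add: eq_neg_iff_add_eq_0)
    then have "(\<Sum>v\<in>t \<inter> U. scale (u v) v) \<in> W" using inW W subspace_neg by metis
    then have z1: "\<forall>y\<in>t \<inter> U. u y = 0"
      using indep_mod[OF W(1) Uprop(1) inj, of "t \<inter> U" u] t(1) by auto
    then have "(\<Sum>v\<in>t \<inter> U. scale (u v) v) = 0" by simp
    then have z2: "(\<Sum>v\<in>t - U. scale (u v) v) = 0" using split t(3) by simp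
    show "u x = 0"
    proof (cases "x \<in> U")
      case True then show ?thesis using z1 t(4) by auto
    next
      case False
      show ?thesis using independentD[OF B(2), of "t - U" u x] z2 t False by auto
    qed
  qed
  have pair: "vector_space_pair scale ((*) :: 'k \<Rightarrow> 'k \<Rightarrow> 'k)"
    unfolding vector_space_pair_def using vs_field vector_space_axioms by simp
  obtain phi where phi: "Vector_Spaces.linear scale ((*) :: 'k \<Rightarrow> 'k \<Rightarrow> 'k) phi"
      "\<forall>x\<in>B \<union> U. phi x = (if x \<in> U then 1 else 0)"
    using vector_space_pair.linear_independent_extend[OF pair indep, of "\<lambda>x. if x \<in> U then 1 else 0"] by blast
  have BU: "B \<inter> U = {}" using B(1) Uprop by auto
  have phiW: "phi x = 0" if "x \<in> W" for x
  proof -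
    have "x \<in> span B" using B that by auto
    moreover have "\<And>y. y \<in> B \<Longrightarrow> phi y = 0" using phi(2) BU by auto
    ultimately show ?thesis
      using vector_space_pair.linear_eq_0_on_span[OF pair phi(1)] by blast
  qed
  have phiU: "phi u = 1" if "u \<in> U" for u using phi(2) that by auto
  define H where "H = V \<inter> {x. phi x = 0}"
  have kern: "subspace {x. phi x = 0}"
    using vector_space_pair.linear_subspace_kernel[OF pair phi(1)] by simp
  have H: "subspace H" unfolding H_def using V kern by (rule subspace_inter)
  have vV: "v \<in> V" using vU Uprop by auto
  have vH: "v \<notin> H" using phiU[OF vU] H_def by simp
  have "H \<subset> V" using vV vH H_def by auto
  then obtain h0 where h0: "h0 \<in> H" "\<forall>h\<in>H. l (v - h0) \<le> l (v - h)" using bap H vV vH by blast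
  define p where "p = v - h0"
  have linphi: "phi (a - b) = phi a - phi b" for a b
    using vector_space_pair.linear_diff[OF pair phi(1)] by simp
  have pV: "p \<in> V" using vV h0 H_def V subspace_diff p_def by auto
  have phip: "phi p = 1" using phiU[OF vU] h0 H_def linphi p_def by simp
  have pW: "p \<notin> W" using phiW phip by auto
  have pperp: "perp p W" unfolding perp_def
  proof
    fix w assume w: "w \<in> W"
    have "h0 - w \<in> H" using h0 w W H_def phiW linphi V subspace_diff by auto
    then have "l (v - h0) \<le> l (v - (h0 - w))" using h0 by blast
    then show "l p \<le> l (p + w)" unfolding p_def by (simp add: algebra_simps)
  qed
  obtain u where u: "u \<in> V - W" "l u < l p" using nm pV pW by blast
  obtain r where r: "r \<in> V - W" "r - u \<in> W" "perp r W" using perp_residual[OF bap V W(1,2) u(1)] by blast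
  have "l r \<le> l (r + (u - r))" using r unfolding perp_def using W subspace_neg by (metis minus_diff_eq)
  then have lr: "l r < l p" using u by simp
  have rT: "l r \<in> T" using r T_def by auto
  define q where "q = rep (l r)"
  have q: "q \<in> U" "l q = l r" using rep[OF rT] q_def U_def rT by auto
  have "v - q \<in> H" unfolding H_def using vV q Uprop V subspace_diff linphi phiU vU by auto
  then have "l (v - h0) \<le> l (v - (v - q))" using h0 by blast
  then have "l p \<le> l q" unfolding p_def by simp
  then show False using q lr by simp
qed

lemma fin_span: "w \<in> span X \<Longrightarrow> \<exists>T. finite T \<and> T \<subseteq> X \<and> w \<in> span T"
proof -
  assume "w \<in> span X"
  then obtain T r where T: "finite T" "T \<subseteq> X" "w = (\<Sum>a\<in>T. scale (r a) a)"
    unfolding span_explicit by blast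
  have "w \<in> span T" unfolding T(3) by (intro span_sum span_scale span_base)
  then show ?thesis using T by blast
qed

end

lemma chain_fin:
  assumes "subset.chain AA C" "C \<noteq> {}" "finite T" "T \<subseteq> \<Union>C"
  shows "\<exists>Y\<in>C. T \<subseteq> Y"
  using finite_subset_Union_chain[OF assms(3,4,2,1)] by blast

locale cc = filt scale l for scale :: "'k::field \<Rightarrow> 'v::ab_group_add \<Rightarrow> 'v" and l +
  fixes d :: "'v \<Rightarrow> 'v" and A :: "int \<Rightarrow> 'v set"
  assumes d_lin: "Vector_Spaces.linear scale scale d"
  and A_sub: "subspace (A k)"
  and dA: "d ` A k \<subseteq> A (k - 1)"
  and dd: "d (d x) = 0"
  and acyc: "{x \<in> A k. d x = 0} \<subseteq> d ` A (k + 1)"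
  and bapA: "\<forall>W. subspace W \<longrightarrow> W \<subset> A k \<longrightarrow> (\<forall>v \<in> A k - W. \<exists>w0 \<in> W. \<forall>w \<in> W. l (v - w0) \<le> l (v - w))"
begin

lemma pair: "vector_space_pair scale scale"
  unfolding vector_space_pair_def using vector_space_axioms by simp

lemma d_add: "d (x + y) = d x + d y"
  using vector_space_pair.linear_add[OF pair d_lin] by simp
lemma d_diff: "d (x - y) = d x - d y"
  using vector_space_pair.linear_diff[OF pair d_lin] by simp
lemma d_zero[simp]: "d 0 = 0"
  using vector_space_pair.linear_0[OF pair d_lin] by simp
lemma d_span: "span (d ` S) = d ` span S"
  using vector_space_pair.linear_span_image[OF pair d_lin] by simp

definition Z :: "int \<Rightarrow> 'v set" where "Z k = {x \<in> A k. d x = 0}"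

lemma Z_sub: "subspace (Z k)"
proof -
  have "subspace {x. d x = 0}"
    using vector_space_pair.linear_subspace_kernel[OF pair d_lin] by simp
  then have "subspace (A k \<inter> {x. d x = 0})" using A_sub by (rule subspace_inter[rotated])
  moreover have "A k \<inter> {x. d x = 0} = Z k" unfolding Z_def by auto
  ultimately show ?thesis by simp
qed

lemma Z_A: "Z k \<subseteq> A k" unfolding Z_def by auto

definition good :: "int \<Rightarrow> 'v set \<Rightarrow> bool" where
  "good k Y \<longleftrightarrow> Y \<subseteq> A k \<and> inj_on d Y \<and> (\<forall>y\<in>Y. d y \<noteq> 0) \<and>
     (\<forall>y\<in>Y. perp y (span (Y - {y}))) \<and>
     (\<forall>y\<in>Y. perp (d y) (span (d ` Y - {d y}))) \<and>
     (\<forall>a\<in>span Y. \<forall>z\<in>Z k. l (a + z) = max (l a) (l z)) \<and>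
     (\<forall>y\<in>Y. \<forall>u\<in>A k - span (Y \<union> Z k). l y \<le> l u)"

lemma good_empty: "good k {}"
  unfolding good_def by simp


lemma goodD:
  assumes "good k Y"
  shows "Y \<subseteq> A k" "inj_on d Y" "\<And>y. y \<in> Y \<Longrightarrow> d y \<noteq> 0"
    "\<And>y. y \<in> Y \<Longrightarrow> perp y (span (Y - {y}))"
    "\<And>y. y \<in> Y \<Longrightarrow> perp (d y) (span (d ` Y - {d y}))"
    "\<And>a z. a \<in> span Y \<Longrightarrow> z \<in> Z k \<Longrightarrow> l (a + z) = max (l a) (l z)"
    "\<And>y u. y \<in> Y \<Longrightarrow> u \<in> A k \<Longrightarrow> u \<notin> span (Y \<union> Z k) \<Longrightarrow> l y \<le> l u"
  using assms unfolding good_def by blast+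

lemma good_chain:
  assumes ch: "subset.chain {Y. good k Y} C" and ne: "C \<noteq> {}"
  shows "good k (\<Union>C)"
proof -
  have g: "good k Y" if "Y \<in> C" for Y using ch that unfolding subset.chain_def by auto
  have fin: "\<exists>Y\<in>C. T \<subseteq> Y" if "finite T" "T \<subseteq> \<Union>C" for T
    using chain_fin[OF ch ne that] .
  let ?U = "\<Union>C"
  have 1: "?U \<subseteq> A k" using goodD(1)[OF g] by blast
  have 2: "inj_on d ?U"
  proof (rule inj_onI)
    fix x y assume xy: "x \<in> ?U" "y \<in> ?U" "d x = d y"
    obtain Y where "Y \<in> C" "{x,y} \<subseteq> Y" using fin[of "{x,y}"] xy by auto
    then show "x = y" using goodD(2)[OF g] xy by (meson inj_onD insert_subset)
  qed
  have 3: "\<forall>y\<in>?U. d y \<noteq> 0" using goodD(3)[OF g] by blast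
  have 4: "\<forall>y\<in>?U. perp y (span (?U - {y}))"
  proof (intro ballI)
    fix y assume y: "y \<in> ?U"
    show "perp y (span (?U - {y}))" unfolding perp_def
    proof
      fix w assume "w \<in> span (?U - {y})"
      then obtain T where T: "finite T" "T \<subseteq> ?U - {y}" "w \<in> span T" using fin_span by blast
      obtain Y where Y: "Y \<in> C" "insert y T \<subseteq> Y" using fin[of "insert y T"] T y by auto
      have "w \<in> span (Y - {y})" using T Y span_mono[of T "Y - {y}"] by auto
      moreover have "perp y (span (Y - {y}))" using goodD(4)[OF g[OF Y(1)]] Y by blast
      ultimately show "l y \<le> l (y + w)" unfolding perp_def by blast
    qed
  qed
  have 5: "\<forall>y\<in>?U. perp (d y) (span (d ` ?U - {d y}))"
  proof (intro ballI)
    fix y assume y: "y \<in> ?U"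
    show "perp (d y) (span (d ` ?U - {d y}))" unfolding perp_def
    proof
      fix w assume "w \<in> span (d ` ?U - {d y})"
      then obtain T where T: "finite T" "T \<subseteq> d ` ?U - {d y}" "w \<in> span T" using fin_span by blast
      obtain T' where T': "T' \<subseteq> ?U" "finite T'" "T = d ` T'"
        using finite_subset_image[OF T(1), of d ?U] T(2) by blast
      obtain Y where Y: "Y \<in> C" "insert y T' \<subseteq> Y" using fin[of "insert y T'"] T' y by auto
      have "T \<subseteq> d ` Y - {d y}" using T T' Y by auto
      then have "w \<in> span (d ` Y - {d y})" using T span_mono by blast
      moreover have "perp (d y) (span (d ` Y - {d y}))" using goodD(5)[OF g[OF Y(1)]] Y by blast
      ultimately show "l (d y) \<le> l (d y + w)" unfolding perp_def by blast
    qed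
  qed
  have 6: "\<forall>a\<in>span ?U. \<forall>z\<in>Z k. l (a + z) = max (l a) (l z)"
  proof (intro ballI)
    fix a z assume a: "a \<in> span ?U" and z: "z \<in> Z k"
    obtain T where T: "finite T" "T \<subseteq> ?U" "a \<in> span T" using fin_span[OF a] by blast
    obtain Y where Y: "Y \<in> C" "T \<subseteq> Y" using fin T by blast
    have "a \<in> span Y" using T Y span_mono by blast
    then show "l (a + z) = max (l a) (l z)" using goodD(6)[OF g[OF Y(1)]] z by blast
  qed
  have 7: "\<forall>y\<in>?U. \<forall>u\<in>A k - span (?U \<union> Z k). l y \<le> l u"
  proof (intro ballI)
    fix y u assume y: "y \<in> ?U" and u: "u \<in> A k - span (?U \<union> Z k)"
    obtain Y where Y: "Y \<in> C" "y \<in> Y" using y by auto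
    have "span (Y \<union> Z k) \<subseteq> span (?U \<union> Z k)" using Y by (intro span_mono) auto
    then have "u \<in> A k - span (Y \<union> Z k)" using u by auto
    then show "l y \<le> l u" using goodD(7)[OF g[OF Y(1)] Y(2)] by blast
  qed
  show ?thesis unfolding good_def using 1 2 3 4 5 6 7 by (simp only: Ball_def)
qed

lemma good_extend:
  assumes g: "good k Y" and ns: "\<not> A k \<subseteq> span (Y \<union> Z k)"
  shows "\<exists>y. y \<notin> Y \<and> good k (insert y Y)"
proof -
  define W where "W = span (Y \<union> Z k)"
  have YA: "Y \<subseteq> A k" using goodD(1)[OF g] .
  have WA: "W \<subseteq> A k" unfolding W_def using YA Z_A A_sub by (intro span_minimal) auto
  have Wsub: "subspace W" unfolding W_def by simp
  have WneA: "W \<noteq> A k" using ns W_def by auto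
  obtain u0 where u0: "u0 \<in> A k - W" "\<forall>u\<in>A k - W. l u0 \<le> l u"
    using min_exists[OF bapA A_sub Wsub WA WneA] by blast
  have spanY_W: "span Y \<subseteq> W" unfolding W_def by (intro span_mono) auto
  have Z_W: "Z k \<subseteq> W" unfolding W_def by (meson le_sup_iff span_superset subset_trans order_refl)
  have spanYA: "span Y \<subseteq> A k" using spanY_W WA by auto
  have du0: "d u0 \<notin> span (d ` Y)"
  proof
    assume "d u0 \<in> span (d ` Y)"
    then obtain a where a: "a \<in> span Y" "d u0 = d a" using d_span by auto
    have "u0 - a \<in> Z k" unfolding Z_def using a u0 spanYA A_sub subspace_diff d_diff by auto
    then have "a + (u0 - a) \<in> W" using a spanY_W Z_W Wsub subspace_add by blast
    then show False using u0 by simp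
  qed
  have dYA: "span (d ` Y) \<subseteq> A (k - 1)" using YA dA A_sub by (intro span_minimal) auto
  have du0A: "d u0 \<in> A (k - 1)" using u0 dA by auto
  have "span (d ` Y) \<subset> A (k - 1)" using dYA du0A du0 by auto
  then obtain w0 where w0: "w0 \<in> span (d ` Y)" "\<forall>w\<in>span (d ` Y). l (d u0 - w0) \<le> l (d u0 - w)"
    using bapA[of "k - 1"] du0A du0 by blast
  obtain a0 where a0: "a0 \<in> span Y" "w0 = d a0" using w0(1) d_span by auto
  define y where "y = u0 - a0"
  have yA: "y \<in> A k" unfolding y_def using u0 a0 spanYA A_sub subspace_diff by blast
  have yW: "y \<notin> W"
  proof
    assume "y \<in> W"
    then have "y + a0 \<in> W" using a0 spanY_W Wsub subspace_add by blast
    then show False using u0 y_def by simp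
  qed
  have la0: "l a0 \<le> l u0"
  proof (rule l_span_le[OF a0(1)], intro ballI)
    fix s assume "s \<in> Y"
    then show "l s \<le> l u0" using goodD(7)[OF g] u0 W_def by blast
  qed
  have ly: "l y \<le> l u0" unfolding y_def using l_diff[of u0 a0] la0 by (simp add: max_def split: if_splits)
  have yperp: "perp y W" unfolding perp_def
  proof
    fix w assume w: "w \<in> W"
    have "y + w \<in> A k" using yA w WA A_sub subspace_add by blast
    moreover have "y + w \<notin> W"
    proof
      assume "y + w \<in> W"
      then have "(y + w) - w \<in> W" using w Wsub subspace_diff by blast
      then show False using yW by simp
    qed
    ultimately have "l u0 \<le> l (y + w)" using u0 by blast
    then show "l y \<le> l (y + w)" using ly by simp
  qed
  have dy: "d y = d u0 - w0" unfolding y_def using a0 d_diff by simp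
  have dyperp: "perp (d y) (span (d ` Y))" unfolding perp_def
  proof
    fix w assume w: "w \<in> span (d ` Y)"
    then have "w0 - w \<in> span (d ` Y)" using w0 span_diff by blast
    then have "l (d u0 - w0) \<le> l (d u0 - (w0 - w))" using w0 by blast
    then show "l (d y) \<le> l (d y + w)" unfolding dy by (simp add: algebra_simps)
  qed
  have dynz: "d y \<noteq> 0" using yW Z_W yA unfolding Z_def by auto
  have dyspan: "d y \<notin> span (d ` Y)"
  proof
    assume "d y \<in> span (d ` Y)"
    then have "d y + w0 \<in> span (d ` Y)" using w0 span_add by blast
    then show False using du0 dy by simp
  qed
  have yY: "y \<notin> Y" using yW spanY_W span_superset by blast
  let ?Y' = "insert y Y"
  have 1: "?Y' \<subseteq> A k" using yA YA by auto
  have 2: "inj_on d ?Y'"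
  proof -
    have "d y \<notin> d ` (Y - {y})" using dyspan span_superset by blast
    then show ?thesis using goodD(2)[OF g] by simp
  qed
  have 3: "\<forall>x\<in>?Y'. d x \<noteq> 0" using dynz goodD(3)[OF g] by auto
  have 4: "\<forall>x\<in>?Y'. perp x (span (?Y' - {x}))"
  proof
    fix x assume x: "x \<in> ?Y'"
    show "perp x (span (?Y' - {x}))"
    proof (cases "x = y")
      case True
      have "?Y' - {x} = Y" using True yY by auto
      then show ?thesis using yperp spanY_W perp_mono True by metis
    next
      case False
      then have xY: "x \<in> Y" using x by simp
      have eqs: "?Y' - {x} = insert y (Y - {x})" using False by auto
      show ?thesis unfolding perp_def
      proof
        fix w assume "w \<in> span (?Y' - {x})"
        then obtain c where c: "w - scale c y \<in> span (Y - {x})" unfolding eqs span_breakdown_eq by blast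
        define w' where "w' = w - scale c y"
        have "x + w' \<in> span Y" using c xY w'_def span_mono[of "Y - {x}" Y] span_base span_add by blast
        then have xw: "x + w' \<in> W" using spanY_W by auto
        have "l (scale c y + (x + w')) = max (l (scale c y)) (l (x + w'))"
          using perp_max[OF Wsub xw perp_scale[OF Wsub yperp]] .
        moreover have "l x \<le> l (x + w')" using goodD(4)[OF g xY] c w'_def unfolding perp_def by blast
        ultimately have "l x \<le> l (scale c y + (x + w'))" by (simp add: le_max_iff_disj)
        moreover have eqxw: "x + w = scale c y + (x + w')" unfolding w'_def by simp
        ultimately show "l x \<le> l (x + w)" unfolding eqxw by blast
      qed
    qed
  qed
  have 5: "\<forall>x\<in>?Y'. perp (d x) (span (d ` ?Y' - {d x}))"
  proof
    fix x assume x: "x \<in> ?Y'"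
    show "perp (d x) (span (d ` ?Y' - {d x}))"
    proof (cases "x = y")
      case True
      have "d ` ?Y' - {d y} \<subseteq> d ` Y" by auto
      then have "span (d ` ?Y' - {d y}) \<subseteq> span (d ` Y)" by (rule span_mono)
      then show ?thesis unfolding True by (rule perp_mono[OF dyperp])
    next
      case False
      then have xY: "x \<in> Y" using x by simp
      have "d x \<in> span (d ` Y)" using xY by (intro span_base) simp
      then have "d x \<noteq> d y" using dyspan by metis
      then have eqs: "d ` ?Y' - {d x} = insert (d y) (d ` Y - {d x})" by auto
      show ?thesis unfolding perp_def
      proof
        fix w assume "w \<in> span (d ` ?Y' - {d x})"
        then have "w \<in> span (insert (d y) (d ` Y - {d x}))" unfolding eqs .
        then obtain c where c: "w - scale c (d y) \<in> span (d ` Y - {d x})" unfolding span_breakdown_eq by blast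
        define w' where "w' = w - scale c (d y)"
        have dxs: "d x \<in> span (d ` Y)" using xY by (intro span_base) simp
        have "w' \<in> span (d ` Y)" using c w'_def span_mono[of "d ` Y - {d x}" "d ` Y"] by blast
        then have "d x + w' \<in> span (d ` Y)" using dxs span_add by blast
        then have "l (scale c (d y) + (d x + w')) = max (l (scale c (d y))) (l (d x + w'))"
          using perp_max[OF subspace_span _ perp_scale[OF subspace_span dyperp]] by blast
        moreover have "l (d x) \<le> l (d x + w')" using goodD(5)[OF g xY] c w'_def unfolding perp_def by blast
        ultimately have "l (d x) \<le> l (scale c (d y) + (d x + w'))" by (simp add: le_max_iff_disj)
        moreover have eqxw: "d x + w = scale c (d y) + (d x + w')" unfolding w'_def by simp
        ultimately show "l (d x) \<le> l (d x + w)" unfolding eqxw by blast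
      qed
    qed
  qed
  have 6: "\<forall>a\<in>span ?Y'. \<forall>z\<in>Z k. l (a + z) = max (l a) (l z)"
  proof (intro ballI)
    fix a z assume a: "a \<in> span ?Y'" and z: "z \<in> Z k"
    obtain c where c: "a - scale c y \<in> span Y" using a span_breakdown_eq by blast
    define a' where "a' = a - scale c y"
    have a'W: "a' \<in> W" using c a'_def spanY_W by auto
    have a'zW: "a' + z \<in> W" using a'W z Z_W Wsub subspace_add by blast
    have p: "perp (scale c y) W" using perp_scale[OF Wsub yperp] .
    have "l (a + z) = l (scale c y + (a' + z))" unfolding a'_def by (simp add: algebra_simps)
    also have "\<dots> = max (l (scale c y)) (l (a' + z))" using perp_max[OF Wsub a'zW p] .
    finally have e1: "l (a + z) = max (l (scale c y)) (l (a' + z))" .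
    have e2: "l (a' + z) = max (l a') (l z)" using goodD(6)[OF g] c a'_def z by blast
    have "l a = l (scale c y + a')" unfolding a'_def by simp
    also have "\<dots> = max (l (scale c y)) (l a')" using perp_max[OF Wsub a'W p] .
    finally have e3: "l a = max (l (scale c y)) (l a')" .
    show "l (a + z) = max (l a) (l z)" unfolding e1 e2 e3 by (simp add: max.assoc)
  qed
  have 7: "\<forall>x\<in>?Y'. \<forall>u\<in>A k - span (?Y' \<union> Z k). l x \<le> l u"
  proof (intro ballI)
    fix x u assume x: "x \<in> ?Y'" and u: "u \<in> A k - span (?Y' \<union> Z k)"
    have "W \<subseteq> span (?Y' \<union> Z k)" unfolding W_def by (intro span_mono) auto
    then have uW: "u \<in> A k - W" using u by auto
    show "l x \<le> l u"
    proof (cases "x = y")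
      case True then show ?thesis using ly u0 uW by (meson order_trans)
    next
      case False
      then have "x \<in> Y" using x by simp
      then show ?thesis using goodD(7)[OF g] uW W_def by blast
    qed
  qed
  have "good k ?Y'" unfolding good_def using 1 2 3 4 5 6 7 by (simp only: Ball_def)
  then show ?thesis using yY by blast
qed

lemma degree: "\<exists>Y. good k Y \<and> A k \<subseteq> span (Y \<union> Z k)"
proof -
  have "\<exists>M\<in>{Y. good k Y}. \<forall>X\<in>{Y. good k Y}. M \<subseteq> X \<longrightarrow> X = M"
  proof (rule subset_Zorn')
    fix C assume ch: "subset.chain {Y. good k Y} C"
    show "\<Union>C \<in> {Y. good k Y}"
    proof (cases "C = {}")
      case True then show ?thesis using good_empty by simp
    next
      case False then show ?thesis using good_chain[OF ch] by simp
    qed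
  qed
  then obtain M where M: "good k M" "\<And>X. good k X \<Longrightarrow> M \<subseteq> X \<Longrightarrow> X = M" by blast
  show ?thesis
  proof (rule ccontr)
    assume "\<not> ?thesis"
    then have "\<not> A k \<subseteq> span (M \<union> Z k)" using M by blast
    then obtain y where "y \<notin> M" "good k (insert y M)" using good_extend[OF M(1)] by blast
    then show False using M(2)[of "insert y M"] by blast
  qed
qed

lemma final:
  assumes Y1: "good (k+1) Y1" "A (k+1) \<subseteq> span (Y1 \<union> Z (k+1))"
  and Y0: "good k Y0" "A k \<subseteq> span (Y0 \<union> Z k)"
  shows "inj_on d Y1" "d ` Y1 \<inter> Y0 = {}" "d ` Y1 \<union> Y0 \<subseteq> A k"
    "\<not> dependent (d ` Y1 \<union> Y0)" "span (d ` Y1 \<union> Y0) = A k"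
    "l_orthogonal scale l (A k) (d ` Y1 \<union> Y0)"
proof -
  define S where "S = d ` Y1 \<union> Y0"
  show "inj_on d Y1" using goodD(2)[OF Y1(1)] .
  have dY1Z: "d ` Y1 \<subseteq> Z k"
  proof
    fix x assume "x \<in> d ` Y1"
    then obtain y where y: "y \<in> Y1" "x = d y" by auto
    have "y \<in> A (k+1)" using goodD(1)[OF Y1(1)] y by auto
    then have "d y \<in> A k" using dA[of "k+1"] by auto
    then show "x \<in> Z k" unfolding Z_def using y dd by auto
  qed
  have Y0Z: "Y0 \<inter> Z k = {}" using goodD(3)[OF Y0(1)] unfolding Z_def by auto
  show disj: "d ` Y1 \<inter> Y0 = {}" using dY1Z Y0Z by auto
  have SA: "S \<subseteq> A k" unfolding S_def using dY1Z Z_A goodD(1)[OF Y0(1)] by auto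
  then show "d ` Y1 \<union> Y0 \<subseteq> A k" unfolding S_def .
  have spdY: "span (d ` Y1) \<subseteq> Z k" using dY1Z Z_sub by (rule span_minimal)
  have nz: "\<forall>s\<in>S. s \<noteq> 0"
  proof
    fix s assume "s \<in> S"
    then show "s \<noteq> 0" unfolding S_def
    proof
      assume "s \<in> d ` Y1" then show ?thesis using goodD(3)[OF Y1(1)] by auto
    next
      assume "s \<in> Y0" then have "d s \<noteq> 0" using goodD(3)[OF Y0(1)] by auto
      then show ?thesis by (metis d_zero)
    qed
  qed
  have loc: "\<forall>s\<in>S. s \<noteq> 0 \<and> perp s (span (S - {s}))"
  proof
    fix s assume sS: "s \<in> S"
    show "s \<noteq> 0 \<and> perp s (span (S - {s}))"
    proof (cases "s \<in> Y0")
      case True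
      have "S - {s} = d ` Y1 \<union> (Y0 - {s})" using disj True unfolding S_def by auto
      then have sp: "span (S - {s}) = {x + y | x y. x \<in> span (d ` Y1) \<and> y \<in> span (Y0 - {s})}"
        by (simp add: span_Un)
      have "perp s (span (S - {s}))" unfolding perp_def
      proof
        fix w assume "w \<in> span (S - {s})"
        then obtain w1 w2 where w: "w = w1 + w2" "w1 \<in> span (d ` Y1)" "w2 \<in> span (Y0 - {s})"
          unfolding sp by blast
        have a: "s + w2 \<in> span Y0" using True w(3) span_mono[of "Y0 - {s}" Y0] span_base span_add by blast
        have z: "w1 \<in> Z k" using w(2) spdY by auto
        have "l (s + w) = l ((s + w2) + w1)" using w(1) by (simp add: algebra_simps)
        also have "\<dots> = max (l (s + w2)) (l w1)" using goodD(6)[OF Y0(1) a z] .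
        finally have "l (s + w2) \<le> l (s + w)" by simp
        moreover have "l s \<le> l (s + w2)" using goodD(4)[OF Y0(1) True] w(3) unfolding perp_def by blast
        ultimately show "l s \<le> l (s + w)" by simp
      qed
      then show ?thesis using nz sS by blast
    next
      case False
      then have sd: "s \<in> d ` Y1" using sS S_def by auto
      then obtain y where y: "y \<in> Y1" "s = d y" by auto
      have "S - {s} = (d ` Y1 - {s}) \<union> Y0" using False unfolding S_def by auto
      then have sp: "span (S - {s}) = {x + y | x y. x \<in> span (d ` Y1 - {s}) \<and> y \<in> span Y0}"
        by (simp add: span_Un)
      have "perp s (span (S - {s}))" unfolding perp_def
      proof
        fix w assume "w \<in> span (S - {s})"
        then obtain w1 w2 where w: "w = w1 + w2" "w1 \<in> span (d ` Y1 - {s})" "w2 \<in> span Y0"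
          unfolding sp by blast
        have "w1 \<in> span (d ` Y1)" using w(2) span_mono[of "d ` Y1 - {s}" "d ` Y1"] by blast
        moreover have "s \<in> span (d ` Y1)" using sd span_base by blast
        ultimately have "s + w1 \<in> span (d ` Y1)" using span_add by blast
        then have z: "s + w1 \<in> Z k" using spdY by auto
        have "l (s + w) = l (w2 + (s + w1))" using w(1) by (simp add: algebra_simps)
        also have "\<dots> = max (l w2) (l (s + w1))" using goodD(6)[OF Y0(1) w(3) z] .
        finally have "l (s + w1) \<le> l (s + w)" by simp
        moreover have "l s \<le> l (s + w1)" using goodD(5)[OF Y1(1) y(1)] w(2) y(2) unfolding perp_def by blast
        ultimately show "l s \<le> l (s + w)" by simp
      qed
      then show ?thesis using nz sS by blast
    qed
  qed
  have orth: "\<forall>T c. finite T \<longrightarrow> T \<subseteq> S \<longrightarrow>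
        l (\<Sum>v\<in>T. scale (c v) v) = Sup {l v | v. v \<in> T \<and> c v \<noteq> 0}"
    using loc_orth[OF loc] by blast
  show "l_orthogonal scale l (A k) (d ` Y1 \<union> Y0)"
    unfolding l_orthogonal_def using orth SA nz S_def by blast
  show "\<not> dependent (d ` Y1 \<union> Y0)"
  proof
    assume "dependent (d ` Y1 \<union> Y0)"
    then obtain t u v where t: "finite t" "t \<subseteq> S" "(\<Sum>v\<in>t. scale (u v) v) = 0" "v \<in> t" "u v \<noteq> 0"
      unfolding dependent_explicit S_def by blast
    have "l (\<Sum>v\<in>t. scale (u v) v) = Sup {l v | v. v \<in> t \<and> u v \<noteq> 0}" using orth t by blast
    then have "Sup {l v | v. v \<in> t \<and> u v \<noteq> 0} = -\<infinity>" using t(3) by simp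
    moreover have "l v \<le> Sup {l v | v. v \<in> t \<and> u v \<noteq> 0}" using t by (intro Sup_upper) blast
    ultimately have "l v = -\<infinity>" by simp
    then have "v = 0" using l_bot by simp
    then show False using nz t by blast
  qed
  have ZsdY: "Z k \<subseteq> span (d ` Y1)"
  proof
    fix z assume z: "z \<in> Z k"
    then obtain x where x: "x \<in> A (k+1)" "z = d x" using acyc[of k] unfolding Z_def by blast
    then have "x \<in> span (Y1 \<union> Z (k+1))" using Y1(2) by auto
    then obtain a b where ab: "x = a + b" "a \<in> span Y1" "b \<in> span (Z (k+1))" unfolding span_Un by blast
    have "b \<in> Z (k+1)" using ab(3) Z_sub by (simp add: span_eq_iff[THEN iffD2])
    then have "d b = 0" unfolding Z_def by simp
    then have "z = d a" using x ab d_add by simp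
    then show "z \<in> span (d ` Y1)" using ab(2) d_span by auto
  qed
  show "span (d ` Y1 \<union> Y0) = A k"
  proof
    show "span (d ` Y1 \<union> Y0) \<subseteq> A k" using SA S_def A_sub span_minimal by blast
    have "Y0 \<union> Z k \<subseteq> span (d ` Y1 \<union> Y0)"
      using ZsdY span_mono[of "d ` Y1" "d ` Y1 \<union> Y0"] span_superset[of "d ` Y1 \<union> Y0"] by blast
    then have "span (Y0 \<union> Z k) \<subseteq> span (d ` Y1 \<union> Y0)" using span_minimal subspace_span by blast
    then show "A k \<subseteq> span (d ` Y1 \<union> Y0)" using Y0(2) by blast
  qed
qed

end

theorem proposition3p13:
  fixes scale :: "'k::field \<Rightarrow> 'v::ab_group_add \<Rightarrow> 'v"
    and A :: "int \<Rightarrow> 'v set" and d :: "'v \<Rightarrow> 'v" and l :: "'v \<Rightarrow> ereal"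
  assumes "ascending_chain_complex scale A d l"
    and "acyclic_complex A d"
    and "\<forall>k. best_approximation_property scale l (A k)"
  shows "\<exists>(I :: int \<Rightarrow> 'v set) (x :: int \<Rightarrow> 'v \<Rightarrow> 'v) (y :: int \<Rightarrow> 'v \<Rightarrow> 'v).
           \<forall>k. inj_on (x k) (I (k + 1)) \<and> inj_on (y k) (I k) \<and>
               x k ` I (k + 1) \<inter> y k ` I k = {} \<and>
               x k ` I (k + 1) \<union> y k ` I k \<subseteq> A k \<and>
               \<not> module.dependent scale (x k ` I (k + 1) \<union> y k ` I k) \<and>
               module.span scale (x k ` I (k + 1) \<union> y k ` I k) = A k \<and>
               l_orthogonal scale l (A k) (x k ` I (k + 1) \<union> y k ` I k) \<and>
               (\<forall>i \<in> I (k + 1). d (y (k + 1) i) = x k i)"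
proof -
  have acc: "chain_complex scale A d" "\<forall>x. l x = -\<infinity> \<longleftrightarrow> x = 0"
    "\<forall>(S :: 'v set) (c :: 'v \<Rightarrow> 'k). finite S \<longrightarrow>
        l (\<Sum>x\<in>S. scale (c x) x) \<le> Sup {l x | x. x \<in> S \<and> c x \<noteq> 0}"
    using assms(1) unfolding ascending_chain_complex_def by blast+
  have ch: "vector_space scale" "\<forall>k. module.subspace scale (A k)"
     "Vector_Spaces.linear scale scale d" "\<forall>k. d ` A k \<subseteq> A (k - 1)" "\<forall>x. d (d x) = 0"
    using acc(1) unfolding chain_complex_def by blast+
  have "cc scale l d A"
    unfolding cc_def cc_axioms_def filt_def filt_axioms_def
    using acc ch assms(2,3) unfolding acyclic_complex_def best_approximation_property_def
    by blast
  then interpret cc scale l d A .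
  have "\<forall>k. \<exists>Y. good k Y \<and> A k \<subseteq> span (Y \<union> Z k)" using degree by blast
  then obtain Yf where Yf: "\<And>k. good k (Yf k) \<and> A k \<subseteq> span (Yf k \<union> Z k)" by metis
  show ?thesis
    apply (rule exI[of _ Yf], rule exI[of _ "\<lambda>k. d"], rule exI[of _ "\<lambda>k. id"])
    apply (rule allI)
    subgoal for k
      using final[OF conjunct1[OF Yf[of "k+1"]] conjunct2[OF Yf[of "k+1"]] conjunct1[OF Yf[of k]] conjunct2[OF Yf[of k]]]
      by simp
    done
qed

end
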